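(* Let $n\ge2$ and let $X$ be a simple directed graph with vertex set $[n]$. Let $p,q\in[n]$ satisfy: - $p\to q\in E(X)$; - $q\to p\notin E(X)$; - $\{p,q\}$ is sink-equivalent in $X$. Then $$\mathrm{ODP}(X,\mathrm{Cycle}_n)_{p\to q}=\frac{n\,x}{n-1}\,\mathrm{ODP}(X-q,\mathrm{Cycle}_{n-1}),$$ where $X-q$ is the induced subgraph of $X$ on $[n]\setminus\{q\}$.
   Context: For $n\ge2$, $\mathrm{Cycle}_n$ is the directed multigraph on $[n]$ with edges $i\to i+1$ ($1\le i\le n-1$) and $n\to1$; for $n=2$ its edges are $1\to2$ and $2\to1$. $\mathrm{Cycle}_1$ is a single vertex with no edges. For a simple directed graph $X$, a set $S\subseteq V(X)$ is sink-equivalent if for every $t\notin S$, either $s\to t\in E(X)$ for all $s\in S$, or $s\to t\notin E(X)$ for all $s\in S$. For directed graphs $X,Y$ with $|V(X)|=|V(Y)|$, $\mathrm{DFS}(X,Y)$ has as vertices the bijections $\sigma:V(X)\to V(Y)$. For each $\sigma$ and ordered pair $(a,b)$ of distinct vertices, it has $m_X(a,b)m_Y(\sigma(a),\sigma(b))$ edges from $\sigma$ to $\sigma\circ(a\,b)$, where $m_X(a,b)$ is the number of edges $a\to b$ in $X$. Thus $\mathrm{outdeg}(\sigma)=\sum_{a\ne b}m_X(a,b)m_Y(\sigma(a),\sigma(b))$ and $\mathrm{ODP}(X,Y)=\sum_\sigma x^{\mathrm{outdeg}(\sigma)}$. $\mathrm{ODP}(X,Y)_{a\to b}$ is the sum of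 $x^{\mathrm{outdeg}(\sigma)}$ over bijections $\sigma$ with $m_Y(\sigma(a),\sigma(b))\ge1$. *)

theory Defs
  imports Main "HOL-Library.FuncSet" "HOL-Computational_Algebra.Polynomial"
begin

definition graph_mult :: "('a \<times> 'a) set \<Rightarrow> 'a \<Rightarrow> 'a \<Rightarrow> nat" where
  "graph_mult E a b = (if (a, b) \<in> E then 1 else 0)"

definition cycle_mult :: "nat \<Rightarrow> nat \<Rightarrow> nat \<Rightarrow> nat" where
  "cycle_mult n i j =
     (if 2 \<le> n \<and> i \<in> {1..n} \<and> j \<in> {1..n} \<and> (j = i + 1 \<or> (i = n \<and> j = 1)) then 1 else 0)"

definition sink_equivalent :: "'a set \<Rightarrow> ('a \<times> 'a) set \<Rightarrow> 'a set \<Rightarrow> bool" where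
  "sink_equivalent V E S \<longleftrightarrow> S \<subseteq> V \<and>
     (\<forall>t \<in> V - S. (\<forall>s \<in> S. (s, t) \<in> E) \<or> (\<forall>s \<in> S. (s, t) \<notin> E))"

text \<open>Bijections V -> W (as extensional functions, so that distinct bijections are distinct).\<close>

definition bijs :: "'a set \<Rightarrow> 'b set \<Rightarrow> ('a \<Rightarrow> 'b) set" where
  "bijs V W = {\<sigma>. bij_betw \<sigma> V W \<and> \<sigma> \<in> extensional V}"

definition outdeg :: "'a set \<Rightarrow> ('a \<Rightarrow> 'a \<Rightarrow> nat) \<Rightarrow> ('b \<Rightarrow> 'b \<Rightarrow> nat) \<Rightarrow> ('a \<Rightarrow> 'b) \<Rightarrow> nat" where
  "outdeg V mX mY \<sigma> = (\<Sum>(a, b) \<in> {(a, b). a \<in> V \<and> b \<in> V \<and> a \<noteq> b}. mX a b * mY (\<sigma> a) (\<sigma> b))"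

definition ODP :: "'a set \<Rightarrow> 'b set \<Rightarrow> ('a \<Rightarrow> 'a \<Rightarrow> nat) \<Rightarrow> ('b \<Rightarrow> 'b \<Rightarrow> nat) \<Rightarrow> rat poly" where
  "ODP V W mX mY = (\<Sum>\<sigma> \<in> bijs V W. monom 1 (outdeg V mX mY \<sigma>))"

definition ODP_edge :: "'a set \<Rightarrow> 'b set \<Rightarrow> ('a \<Rightarrow> 'a \<Rightarrow> nat) \<Rightarrow> ('b \<Rightarrow> 'b \<Rightarrow> nat) \<Rightarrow> 'a \<Rightarrow> 'a \<Rightarrow> rat poly" where
  "ODP_edge V W mX mY a b =
     (\<Sum>\<sigma> \<in> {\<sigma> \<in> bijs V W. mY (\<sigma> a) (\<sigma> b) \<ge> 1}. monom 1 (outdeg V mX mY \<sigma>))"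

end

theory Submission
  imports Defs
begin

definition sc :: "nat \<Rightarrow> nat \<Rightarrow> nat" where
  "sc m i = (if i = m then 1 else i + 1)"
definition pc :: "nat \<Rightarrow> nat \<Rightarrow> nat" where
  "pc m i = (if i = 1 then m else i - 1)"

lemma sc_in: "i \<in> {1..m} \<Longrightarrow> sc m i \<in> {1..m}"
  by (auto simp: sc_def)
lemma pc_in: "i \<in> {1..m} \<Longrightarrow> pc m i \<in> {1..m}"
  by (auto simp: pc_def)
lemma pc_sc: "i \<in> {1..m} \<Longrightarrow> pc m (sc m i) = i"
  by (auto simp: sc_def pc_def)
lemma sc_pc: "i \<in> {1..m} \<Longrightarrow> sc m (pc m i) = i"
  by (auto simp: sc_def pc_def)

lemma cm_sc: "i \<in> {1..m} \<Longrightarrow> j \<in> {1..m} \<Longrightarrow>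
   cycle_mult m (sc m i) (sc m j) = cycle_mult m i j"
  by (auto simp: sc_def cycle_mult_def)

lemma finite_bijs: "finite V \<Longrightarrow> finite W \<Longrightarrow> finite (bijs V W)"
proof -
  assume "finite V" "finite W"
  have "bijs V W \<subseteq> PiE V (\<lambda>_. W)"
    by (auto simp: bijs_def PiE_iff bij_betw_def extensional_def)
  moreover have "finite (PiE V (\<lambda>_. W))" using \<open>finite V\<close> \<open>finite W\<close> by (simp add: finite_PiE)
  ultimately show ?thesis by (rule finite_subset)
qed

lemma bijs_rot:
  assumes "\<sigma> \<in> bijs V {1..m}"
  shows "restrict (sc m \<circ> \<sigma>) V \<in> bijs V {1..m}" "restrict (pc m \<circ> \<sigma>) V \<in> bijs V {1..m}"
proof -
  have b: "bij_betw \<sigma> V {1..m}" using assms by (simp add: bijs_def)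
  have "bij_betw (sc m) {1..m} {1..m}"
    by (rule bij_betw_byWitness[where f'="pc m"]) (auto simp: pc_sc sc_pc sc_def pc_def)
  then have "bij_betw (sc m \<circ> \<sigma>) V {1..m}" using b bij_betw_trans by blast
  then show "restrict (sc m \<circ> \<sigma>) V \<in> bijs V {1..m}"
    by (simp add: bijs_def bij_betw_cong[of V "restrict (sc m \<circ> \<sigma>) V" "sc m \<circ> \<sigma>"])
  have "bij_betw (pc m) {1..m} {1..m}"
    by (rule bij_betw_byWitness[where f'="sc m"]) (auto simp: pc_sc sc_pc sc_def pc_def)
  then have "bij_betw (pc m \<circ> \<sigma>) V {1..m}" using b bij_betw_trans by blast
  then show "restrict (pc m \<circ> \<sigma>) V \<in> bijs V {1..m}"
    by (simp add: bijs_def bij_betw_cong[of V "restrict (pc m \<circ> \<sigma>) V" "pc m \<circ> \<sigma>"])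
qed

lemma bijs_val: "\<sigma> \<in> bijs V W \<Longrightarrow> x \<in> V \<Longrightarrow> \<sigma> x \<in> W"
  by (auto simp: bijs_def bij_betw_def)

lemma rot_step:
  assumes fin: "finite V" and i: "i \<in> {1..m}"
    and Pinv: "\<And>\<sigma>. \<sigma> \<in> bijs V {1..m} \<Longrightarrow> P (restrict (sc m \<circ> \<sigma>) V) = P \<sigma>"
    and finv: "\<And>\<sigma>. \<sigma> \<in> bijs V {1..m} \<Longrightarrow> f (restrict (sc m \<circ> \<sigma>) V) = f \<sigma>"
    and a: "a \<in> V"
  shows "sum f {\<sigma>\<in>bijs V {1..m}. \<sigma> a = i \<and> P \<sigma>} = sum f {\<sigma>\<in>bijs V {1..m}. \<sigma> a = sc m i \<and> P \<sigma>}"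
proof -
  let ?S = "{\<sigma>\<in>bijs V {1..m}. \<sigma> a = i \<and> P \<sigma>}"
  let ?T = "{\<sigma>\<in>bijs V {1..m}. \<sigma> a = sc m i \<and> P \<sigma>}"
  let ?h = "\<lambda>\<sigma>. restrict (sc m \<circ> \<sigma>) V"
  let ?h' = "\<lambda>\<sigma>. restrict (pc m \<circ> \<sigma>) V"
  have hh: "?h' (?h \<sigma>) = \<sigma>" if "\<sigma> \<in> bijs V {1..m}" for \<sigma>
  proof
    fix x show "?h' (?h \<sigma>) x = \<sigma> x"
      using that bijs_val[OF that] by (cases "x \<in> V") (auto simp: pc_sc bijs_def extensional_def)
  qed
  have hh': "?h (?h' \<sigma>) = \<sigma>" if "\<sigma> \<in> bijs V {1..m}" for \<sigma>
  proof
    fix x show "?h (?h' \<sigma>) x = \<sigma> x"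
      using that bijs_val[OF that] by (cases "x \<in> V") (auto simp: sc_pc bijs_def extensional_def)
  qed
  have bij: "bij_betw ?h ?S ?T"
  proof (rule bij_betw_byWitness[where f'="?h'"])
    show "\<forall>\<sigma>\<in>?S. ?h' (?h \<sigma>) = \<sigma>" using hh by blast
    show "\<forall>\<sigma>\<in>?T. ?h (?h' \<sigma>) = \<sigma>" using hh' by blast
    show "?h ` ?S \<subseteq> ?T" using bijs_rot Pinv a by auto
    show "?h' ` ?T \<subseteq> ?S"
    proof
      fix \<tau> assume "\<tau> \<in> ?h' ` ?T"
      then obtain \<sigma> where s: "\<sigma> \<in> ?T" "\<tau> = ?h' \<sigma>" by blast
      have tb: "\<tau> \<in> bijs V {1..m}" using s bijs_rot by auto
      have "?h \<tau> = \<sigma>" using s hh' by auto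
      then have "P \<tau>" using Pinv[OF tb] s by auto
      moreover have "\<tau> a = i" using s a i pc_sc by auto
      ultimately show "\<tau> \<in> ?S" using tb by auto
    qed
  qed
  have "sum f ?T = sum (\<lambda>\<sigma>. f (?h \<sigma>)) ?S" by (rule sum.reindex_bij_betw[OF bij, symmetric])
  also have "\<dots> = sum f ?S" using finv by (intro sum.cong) auto
  finally show ?thesis by simp
qed

lemma rot_all:
  assumes fin: "finite V" and a: "a \<in> V"
    and Pinv: "\<And>\<sigma>. \<sigma> \<in> bijs V {1..m} \<Longrightarrow> P (restrict (sc m \<circ> \<sigma>) V) = P \<sigma>"
    and finv: "\<And>\<sigma>. \<sigma> \<in> bijs V {1..m} \<Longrightarrow> f (restrict (sc m \<circ> \<sigma>) V) = f \<sigma>"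
    and j: "j \<in> {1..m}"
  shows "sum f {\<sigma>\<in>bijs V {1..m}. \<sigma> a = j \<and> P \<sigma>} = sum f {\<sigma>\<in>bijs V {1..m}. \<sigma> a = m \<and> P \<sigma>}"
proof -
  have "\<forall>j. m - j = d \<longrightarrow> j \<in> {1..m} \<longrightarrow>
    sum f {\<sigma>\<in>bijs V {1..m}. \<sigma> a = j \<and> P \<sigma>} = sum f {\<sigma>\<in>bijs V {1..m}. \<sigma> a = m \<and> P \<sigma>}" for d
  proof (induction d)
    case 0
    then show ?case by auto
  next
    case (Suc d)
    show ?case
    proof (intro allI impI)
      fix j assume jd: "m - j = Suc d" and jm: "j \<in> {1..m}"
      have "sc m j = j + 1" using jd by (simp add: sc_def)
      then have "sum f {\<sigma>\<in>bijs V {1..m}. \<sigma> a = j \<and> P \<sigma>} = sum f {\<sigma>\<in>bijs V {1..m}. \<sigma> a = j + 1 \<and> P \<sigma>}"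
        using rot_step[of V j m P f a, OF fin jm Pinv finv a] by simp
      also have "\<dots> = sum f {\<sigma>\<in>bijs V {1..m}. \<sigma> a = m \<and> P \<sigma>}"
        using Suc.IH jd jm by auto
      finally show "sum f {\<sigma>\<in>bijs V {1..m}. \<sigma> a = j \<and> P \<sigma>} = sum f {\<sigma>\<in>bijs V {1..m}. \<sigma> a = m \<and> P \<sigma>}" .
    qed
  qed
  then show ?thesis using j by blast
qed

lemma rot_sum:
  fixes f :: "('a \<Rightarrow> nat) \<Rightarrow> 'b::comm_semiring_1"
  assumes fin: "finite V" and a: "a \<in> V"
    and Pinv: "\<And>\<sigma>. \<sigma> \<in> bijs V {1..m} \<Longrightarrow> P (restrict (sc m \<circ> \<sigma>) V) = P \<sigma>"
    and finv: "\<And>\<sigma>. \<sigma> \<in> bijs V {1..m} \<Longrightarrow> f (restrict (sc m \<circ> \<sigma>) V) = f \<sigma>"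
  shows "sum f {\<sigma>\<in>bijs V {1..m}. P \<sigma>} = of_nat m * sum f {\<sigma>\<in>bijs V {1..m}. \<sigma> a = m \<and> P \<sigma>}"
proof -
  let ?S = "{\<sigma>\<in>bijs V {1..m}. P \<sigma>}"
  have finS: "finite ?S" by (rule finite_subset[OF _ finite_bijs[OF fin, of "{1..m}"]]) auto
  have "sum f ?S = (\<Sum>y\<in>{1..m}. sum f {x. x \<in> ?S \<and> x a = y})"
    by (rule sum.group[symmetric, OF finS]) (auto intro: bijs_val[OF _ a])
  also have "\<dots> = (\<Sum>y\<in>{1..m}. sum f {\<sigma>\<in>bijs V {1..m}. \<sigma> a = y \<and> P \<sigma>})"
    by (intro sum.cong) (auto intro!: arg_cong[where f="sum f"])
  also have "\<dots> = (\<Sum>y\<in>{1..m}. sum f {\<sigma>\<in>bijs V {1..m}. \<sigma> a = m \<and> P \<sigma>})"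
    by (rule sum.cong[OF refl], rule rot_all[of V a m P f, OF fin a Pinv finv])
  also have "\<dots> = of_nat m * sum f {\<sigma>\<in>bijs V {1..m}. \<sigma> a = m \<and> P \<sigma>}"
    by simp
  finally show ?thesis .
qed

lemma outdeg_rot:
  assumes "\<sigma> \<in> bijs V {1..m}"
  shows "outdeg V mX (cycle_mult m) (restrict (sc m \<circ> \<sigma>) V) = outdeg V mX (cycle_mult m) \<sigma>"
  unfolding outdeg_def
proof (intro sum.cong refl)
  fix x assume "x \<in> {(a, b). a \<in> V \<and> b \<in> V \<and> a \<noteq> b}"
  then obtain a b where x: "x = (a, b)" "a \<in> V" "b \<in> V" by auto
  show "(case x of (a, b) \<Rightarrow> mX a b * cycle_mult m (restrict (sc m \<circ> \<sigma>) V a) (restrict (sc m \<circ> \<sigma>) V b)) =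
    (case x of (a, b) \<Rightarrow> mX a b * cycle_mult m (\<sigma> a) (\<sigma> b))"
    using x cm_sc[OF bijs_val[OF assms x(2)] bijs_val[OF assms x(3)]] by simp
qed

lemma outdeg_card:
  assumes "finite V"
  shows "outdeg V (graph_mult E) (cycle_mult m) \<sigma> =
    card {x \<in> {(a, b). a \<in> V \<and> b \<in> V \<and> a \<noteq> b}. x \<in> E \<and> cycle_mult m (\<sigma> (fst x)) (\<sigma> (snd x)) = 1}"
proof -
  let ?PS = "{(a, b). a \<in> V \<and> b \<in> V \<and> a \<noteq> b}"
  let ?Q = "\<lambda>x. x \<in> E \<and> cycle_mult m (\<sigma> (fst x)) (\<sigma> (snd x)) = 1"
  have fin: "finite ?PS" by (rule finite_subset[of _ "V \<times> V"]) (use assms in auto)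
  have "card {x \<in> ?PS. ?Q x} = (\<Sum>x\<in>{x \<in> ?PS. ?Q x}. 1)" by simp
  also have "\<dots> = (\<Sum>x\<in>?PS. if ?Q x then 1 else 0)" by (rule sum.inter_filter[OF fin])
  also have "\<dots> = outdeg V (graph_mult E) (cycle_mult m) \<sigma>"
    unfolding outdeg_def by (intro sum.cong refl) (auto simp: graph_mult_def cycle_mult_def)
  finally show ?thesis by simp
qed

lemma key:
  fixes n p q :: nat and E :: "(nat \<times> nat) set"
  assumes n2: "2 \<le> n" and Esub: "E \<subseteq> {1..n} \<times> {1..n}" and irr: "\<forall>v. (v, v) \<notin> E"
    and p: "p \<in> {1..n}" and q: "q \<in> {1..n}" and pq: "(p, q) \<in> E" and qp: "(q, p) \<notin> E"
    and se: "sink_equivalent {1..n} E {p, q}"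
    and sig: "\<sigma> \<in> bijs {1..n} {1..n}" and sq: "\<sigma> q = n" and sp: "\<sigma> p = n - 1"
  shows "outdeg {1..n} (graph_mult E) (cycle_mult n) \<sigma> =
    Suc (outdeg ({1..n} - {q}) (graph_mult (E \<inter> (({1..n} - {q}) \<times> ({1..n} - {q})))) (cycle_mult (n - 1))
       (restrict \<sigma> ({1..n} - {q})))"
proof -
  let ?V = "{1..n}" let ?V' = "{1..n} - {q}" let ?E' = "E \<inter> (?V' \<times> ?V')"
  let ?m = "n - 1" let ?\<tau> = "restrict \<sigma> ?V'"
  let ?A = "{x \<in> {(a, b). a \<in> ?V \<and> b \<in> ?V \<and> a \<noteq> b}. x \<in> E \<and> cycle_mult n (\<sigma> (fst x)) (\<sigma> (snd x)) = 1}"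
  let ?B = "{x \<in> {(a, b). a \<in> ?V' \<and> b \<in> ?V' \<and> a \<noteq> b}. x \<in> ?E' \<and> cycle_mult ?m (?\<tau> (fst x)) (?\<tau> (snd x)) = 1}"
  have pnq: "p \<noteq> q" using pq irr by auto
  have inj: "\<And>x y. x \<in> ?V \<Longrightarrow> y \<in> ?V \<Longrightarrow> \<sigma> x = \<sigma> y \<Longrightarrow> x = y"
    using sig unfolding bijs_def bij_betw_def inj_on_def by blast
  have rng: "\<And>x. x \<in> ?V \<Longrightarrow> \<sigma> x \<in> ?V" using bijs_val[OF sig] by blast
  have sev: "\<And>t. t \<in> ?V \<Longrightarrow> t \<noteq> p \<Longrightarrow> t \<noteq> q \<Longrightarrow> ((p, t) \<in> E \<longleftrightarrow> (q, t) \<in> E)"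
    using se unfolding sink_equivalent_def by blast
  have cmn: "\<And>i j. cycle_mult n i j = 1 \<longleftrightarrow> (i \<in> ?V \<and> j \<in> ?V \<and> (j = i + 1 \<or> i = n \<and> j = 1))"
    using n2 by (auto simp: cycle_mult_def)
  have cmm: "\<And>i j. cycle_mult ?m i j = 1 \<longleftrightarrow> (2 \<le> ?m \<and> i \<in> {1..?m} \<and> j \<in> {1..?m} \<and> (j = i + 1 \<or> i = ?m \<and> j = 1))"
    by (auto simp: cycle_mult_def)
  have cmnD: "\<And>i j. cycle_mult n i j = 1 \<Longrightarrow> i \<in> ?V \<and> j \<in> ?V \<and> (j = i + 1 \<or> i = n \<and> j = 1)"
    using cmn by blast
  have cmnI: "\<And>i j. i \<in> ?V \<Longrightarrow> j \<in> ?V \<Longrightarrow> (j = i + 1 \<or> i = n \<and> j = 1) \<Longrightarrow> cycle_mult n i j = 1"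
    using cmn by blast
  have cmmD: "\<And>i j. cycle_mult ?m i j = 1 \<Longrightarrow> 2 \<le> ?m \<and> i \<in> {1..?m} \<and> j \<in> {1..?m} \<and> (j = i + 1 \<or> i = ?m \<and> j = 1)"
    using cmm by blast
  have cmmI: "\<And>i j. 2 \<le> ?m \<Longrightarrow> i \<in> {1..?m} \<Longrightarrow> j \<in> {1..?m} \<Longrightarrow> (j = i + 1 \<or> i = ?m \<and> j = 1) \<Longrightarrow> cycle_mult ?m i j = 1"
    using cmm by blast
  have memA: "\<And>a b. (a, b) \<in> ?A \<longleftrightarrow> a \<in> ?V \<and> b \<in> ?V \<and> a \<noteq> b \<and> (a, b) \<in> E \<and> cycle_mult n (\<sigma> a) (\<sigma> b) = 1"
    by simp
  have memB: "\<And>a b. (a, b) \<in> ?B \<longleftrightarrow> a \<in> ?V' \<and> b \<in> ?V' \<and> a \<noteq> b \<and> (a, b) \<in> E \<and> cycle_mult ?m (\<sigma> a) (\<sigma> b) = 1"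
    by auto
  let ?g = "\<lambda>(a::nat, b::nat). (if a = q then p else a, b)"
  let ?g' = "\<lambda>(a::nat, b::nat). (if a = p \<and> \<sigma> b = 1 then q else a, b)"
  have bq: "b \<noteq> q" if ab: "(a, b) \<in> ?A" "(a, b) \<noteq> (p, q)" for a b
  proof
    assume bq: "b = q"
    have a: "a \<in> ?V" and c: "cycle_mult n (\<sigma> a) (\<sigma> b) = 1" using ab memA by blast+
    have "\<sigma> b = \<sigma> a + 1 \<or> \<sigma> a = n \<and> \<sigma> b = 1" using cmnD[OF c] by blast
    then have "\<sigma> a = \<sigma> p" using sp sq bq n2 by auto
    then have "a = p" using inj a p by blast
    then show False using ab bq by auto
  qed
  have g1: "?g x \<in> ?B" if "x \<in> ?A - {(p, q)}" for x
  proof -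
    obtain a b where x: "x = (a, b)" by (cases x)
    have ab: "(a, b) \<in> ?A" "(a, b) \<noteq> (p, q)" using that x by auto
    have a: "a \<in> ?V" and b: "b \<in> ?V" and abne: "a \<noteq> b" and abE: "(a, b) \<in> E"
      and c: "cycle_mult n (\<sigma> a) (\<sigma> b) = 1" using ab(1) memA by blast+
    have bq': "b \<noteq> q" using bq[OF ab] .
    have dis: "\<sigma> b = \<sigma> a + 1 \<or> \<sigma> a = n \<and> \<sigma> b = 1" using cmnD[OF c] by blast
    have sbV: "\<sigma> b \<in> ?V" using rng b by blast
    show ?thesis
    proof (cases "a = q")
      case True
      then have sb: "\<sigma> b = 1" using dis sq sbV by auto
      have bp: "b \<noteq> p" using abE True qp by auto
      have "\<sigma> b \<noteq> \<sigma> p" using inj b p bp by blast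
      then have m2: "2 \<le> ?m" using n2 sb sp by auto
      have pbE: "(p, b) \<in> E" using sev[OF b bp bq'] abE True by blast
      have "cycle_mult ?m (\<sigma> p) (\<sigma> b) = 1" by (rule cmmI) (use m2 sb sp in auto)
      then have B: "(p, b) \<in> ?B" unfolding memB using pbE bp bq' b p pnq by auto
      have eq: "?g x = (p, b)" using x True by simp
      show ?thesis unfolding eq by (rule B)
    next
      case False
      have sa: "\<sigma> a \<noteq> n" using inj a q False sq by metis
      have sb: "\<sigma> b \<noteq> n" using inj b q bq' sq by metis
      have e: "\<sigma> b = \<sigma> a + 1" using dis sa by blast
      have saV: "\<sigma> a \<in> ?V" using rng a by blast
      have "cycle_mult ?m (\<sigma> a) (\<sigma> b) = 1" proof (rule cmmI)
        show "\<sigma> a \<in> {1..?m}" "\<sigma> b \<in> {1..?m}" using e sa sb saV sbV by auto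
        then show "2 \<le> ?m" using e by auto
      qed (use e in auto)
      then have B: "(a, b) \<in> ?B" unfolding memB using abE abne a b False bq' by auto
      have eq: "?g x = (a, b)" using x False by simp
      show ?thesis unfolding eq by (rule B)
    qed
  qed
  have g2: "?g' y \<in> ?A - {(p, q)}" if "y \<in> ?B" for y
  proof -
    obtain a b where y: "y = (a, b)" by (cases y)
    have ab: "(a, b) \<in> ?B" using that y by auto
    have a: "a \<in> ?V'" and b: "b \<in> ?V'" and abne: "a \<noteq> b" and abE: "(a, b) \<in> E"
      and c: "cycle_mult ?m (\<sigma> a) (\<sigma> b) = 1" using ab memB by blast+
    have dis: "2 \<le> ?m \<and> \<sigma> a \<in> {1..?m} \<and> \<sigma> b \<in> {1..?m} \<and> (\<sigma> b = \<sigma> a + 1 \<or> \<sigma> a = ?m \<and> \<sigma> b = 1)"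
      using cmmD[OF c] by blast
    show ?thesis
    proof (cases "a = p \<and> \<sigma> b = 1")
      case True
      have qbE: "(q, b) \<in> E" using sev[of b] b abE abne True by blast
      have "cycle_mult n (\<sigma> q) (\<sigma> b) = 1" by (rule cmnI) (use sq True n2 in auto)
      then have B: "(q, b) \<in> ?A - {(p, q)}" unfolding memA using qbE b q pnq by auto
      have eq: "?g' y = (q, b)" using y True by simp
      show ?thesis unfolding eq by (rule B)
    next
      case False
      have "\<sigma> a = ?m \<Longrightarrow> a = p" using inj[of a p] a sp p by auto
      then have e: "\<sigma> b = \<sigma> a + 1" using False dis by auto
      have "cycle_mult n (\<sigma> a) (\<sigma> b) = 1" by (rule cmnI) (use e dis in auto)
      then have B: "(a, b) \<in> ?A - {(p, q)}" unfolding memA using abE abne a b by auto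
      have eq: "?g' y = (a, b)" using y False by auto
      show ?thesis unfolding eq by (rule B)
    qed
  qed
  have g3: "?g' (?g x) = x" if "x \<in> ?A - {(p, q)}" for x
  proof -
    obtain a b where x: "x = (a, b)" by (cases x)
    have ab: "(a, b) \<in> ?A" "(a, b) \<noteq> (p, q)" using that x by auto
    have b: "b \<in> ?V" and abne: "a \<noteq> b"
      and c: "cycle_mult n (\<sigma> a) (\<sigma> b) = 1" using ab(1) memA by blast+
    have dis: "\<sigma> b = \<sigma> a + 1 \<or> \<sigma> a = n \<and> \<sigma> b = 1" using cmnD[OF c] by blast
    have sbV: "\<sigma> b \<in> ?V" using rng b by blast
    show ?thesis
    proof (cases "a = q")
      case True
      then have sb: "\<sigma> b = 1" using dis sq sbV by auto
      then show ?thesis using x True by simp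
    next
      case False
      have "\<not> (a = p \<and> \<sigma> b = 1)"
      proof
        assume h: "a = p \<and> \<sigma> b = 1"
        then show False using dis sp n2 by auto
      qed
      then show ?thesis using x False by auto
    qed
  qed
  have g4: "?g (?g' y) = y" if "y \<in> ?B" for y
    using that pnq by (cases y) auto
  have bij: "bij_betw ?g (?A - {(p, q)}) ?B"
  proof (rule bij_betw_byWitness[where f'="?g'"])
    show "\<forall>x\<in>?A - {(p, q)}. ?g' (?g x) = x" by (intro ballI g3)
    show "\<forall>y\<in>?B. ?g (?g' y) = y" by (intro ballI g4)
    show "?g ` (?A - {(p, q)}) \<subseteq> ?B" by (intro image_subsetI g1)
    show "?g' ` ?B \<subseteq> ?A - {(p, q)}" by (intro image_subsetI g2)
  qed
  have finA: "finite ?A" by (rule finite_subset[of _ "?V \<times> ?V"]) auto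
  have "cycle_mult n (\<sigma> p) (\<sigma> q) = 1" by (rule cmnI) (use p q sp sq n2 in auto)
  then have pqA: "(p, q) \<in> ?A" unfolding memA using p q pnq pq by blast
  have "card ?A = Suc (card (?A - {(p, q)}))"
    using card_Suc_Diff1[OF finA pqA] by (rule sym)
  also have "card (?A - {(p, q)}) = card ?B" using bij_betw_same_card[OF bij] .
  finally have "card ?A = Suc (card ?B)" .
  moreover have "outdeg ?V (graph_mult E) (cycle_mult n) \<sigma> = card ?A" by (rule outdeg_card) simp
  moreover have "outdeg ?V' (graph_mult ?E') (cycle_mult ?m) ?\<tau> = card ?B" by (rule outdeg_card) simp
  ultimately show ?thesis by (simp only:)
qed


theorem mainTheorem15:
  fixes n p q :: nat and E :: "(nat \<times> nat) set"
  assumes "2 \<le> n"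
    and "E \<subseteq> {1..n} \<times> {1..n}"
    and "\<forall>v. (v, v) \<notin> E"
    and "p \<in> {1..n}" and "q \<in> {1..n}"
    and "(p, q) \<in> E"
    and "(q, p) \<notin> E"
    and "sink_equivalent {1..n} E {p, q}"
  shows "ODP_edge {1..n} {1..n} (graph_mult E) (cycle_mult n) p q =
    smult (of_nat n / of_nat (n - 1))
      (monom 1 1 * ODP ({1..n} - {q}) {1..n - 1}
         (graph_mult (E \<inter> (({1..n} - {q}) \<times> ({1..n} - {q})))) (cycle_mult (n - 1)))"
proof -
  note n2 = assms(1) and p = assms(4) and q = assms(5) and pq = assms(6)
  let ?V = "{1..n}" let ?V' = "{1..n} - {q}" let ?E' = "E \<inter> (?V' \<times> ?V')"
  let ?m = "n - 1"
  let ?F = "\<lambda>\<sigma>. monom (1::rat) (outdeg ?V (graph_mult E) (cycle_mult n) \<sigma>)"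
  let ?G = "\<lambda>\<tau>. monom (1::rat) (outdeg ?V' (graph_mult ?E') (cycle_mult ?m) \<tau>)"
  let ?P = "\<lambda>\<sigma>. 1 \<le> cycle_mult n (\<sigma> p) (\<sigma> q)"
  let ?S2 = "{\<sigma>\<in>bijs ?V ?V. \<sigma> q = n \<and> ?P \<sigma>}"
  let ?T = "{\<tau>\<in>bijs ?V' {1..?m}. \<tau> p = ?m \<and> True}"
  have pnq: "p \<noteq> q" using pq assms(3) by auto
  have pV': "p \<in> ?V'" using p pnq by blast
  have m1: "1 \<le> ?m" using n2 by simp
  have cm1: "\<And>i j. 1 \<le> cycle_mult n i j \<longleftrightarrow> cycle_mult n i j = 1"
    by (simp add: cycle_mult_def)
  have s1: "ODP_edge ?V ?V (graph_mult E) (cycle_mult n) p q = of_nat n * sum ?F ?S2"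
    unfolding ODP_edge_def
  proof (rule rot_sum)
    show "finite ?V" by simp
    show "q \<in> ?V" by (rule q)
    show "?P (restrict (sc n \<circ> \<sigma>) ?V) = ?P \<sigma>" if "\<sigma> \<in> bijs ?V ?V" for \<sigma>
      using cm_sc[OF bijs_val[OF that p] bijs_val[OF that q]] p q by simp
    show "?F (restrict (sc n \<circ> \<sigma>) ?V) = ?F \<sigma>" if "\<sigma> \<in> bijs ?V ?V" for \<sigma>
      using outdeg_rot[OF that] by simp
  qed
  have s2: "ODP ?V' {1..?m} (graph_mult ?E') (cycle_mult ?m) = of_nat ?m * sum ?G ?T"
  proof -
    have "ODP ?V' {1..?m} (graph_mult ?E') (cycle_mult ?m) = sum ?G {\<tau>\<in>bijs ?V' {1..?m}. True}"
      unfolding ODP_def by simp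
    also have "\<dots> = of_nat ?m * sum ?G ?T"
    proof (rule rot_sum)
      show "finite ?V'" by simp
      show "p \<in> ?V'" by (rule pV')
      show "True = True" for \<sigma> :: "nat \<Rightarrow> nat" by simp
      show "?G (restrict (sc ?m \<circ> \<sigma>) ?V') = ?G \<sigma>" if "\<sigma> \<in> bijs ?V' {1..?m}" for \<sigma>
        using outdeg_rot[OF that] by simp
    qed
    finally show ?thesis .
  qed
  let ?h = "\<lambda>\<sigma>. restrict \<sigma> ?V'"
  let ?h' = "\<lambda>\<tau>. restrict (\<tau>(q := n)) ?V"
  have Vm: "{1..?m} = ?V - {n}" using n2 by auto
  have S2p: "\<sigma> p = ?m" if "\<sigma> \<in> ?S2" for \<sigma>
  proof -
    have "cycle_mult n (\<sigma> p) n = 1" using that cm1 by auto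
    then have "2 \<le> n \<and> \<sigma> p \<in> ?V \<and> n \<in> ?V \<and> (n = \<sigma> p + 1 \<or> \<sigma> p = n \<and> n = 1)"
      unfolding cycle_mult_def by (metis zero_neq_one)
    then show ?thesis using n2 by linarith
  qed
  have hT: "?h \<sigma> \<in> ?T" if s: "\<sigma> \<in> ?S2" for \<sigma>
  proof -
    have b: "bij_betw \<sigma> ?V ?V" and sq: "\<sigma> q = n" using s by (auto simp: bijs_def)
    have inj: "inj_on \<sigma> ?V" using b by (simp add: bij_betw_def)
    have "\<sigma> ` ?V' = \<sigma> ` ?V - \<sigma> ` {q}" by (rule inj_on_image_set_diff[OF inj]) (use q in auto)
    also have "\<dots> = ?V - {n}" using b sq by (simp add: bij_betw_def)
    finally have "bij_betw \<sigma> ?V' {1..?m}" using bij_betw_subset[OF b] Vm by auto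
    then have "bij_betw (?h \<sigma>) ?V' {1..?m}" by (rule bij_betw_cong[THEN iffD1, rotated]) simp
    moreover have "?h \<sigma> p = ?m" using S2p[OF s] pV' by simp
    ultimately show ?thesis by (simp add: bijs_def)
  qed
  have h'S: "?h' \<tau> \<in> ?S2" if t: "\<tau> \<in> ?T" for \<tau>
  proof -
    have b: "bij_betw \<tau> ?V' {1..?m}" and tp: "\<tau> p = ?m" using t by (auto simp: bijs_def)
    have "bij_betw (?h' \<tau>) ?V' {1..?m}" using b by (rule bij_betw_cong[THEN iffD1, rotated]) auto
    then have "bij_betw (?h' \<tau>) (?V' \<union> {q}) ({1..?m} \<union> {?h' \<tau> q})"
      by (rule notIn_Un_bij_betw[rotated 2]) (use q n2 in auto)
    moreover have "?V' \<union> {q} = ?V" using q by auto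
    moreover have "{1..?m} \<union> {?h' \<tau> q} = ?V" using q n2 by auto
    ultimately have "bij_betw (?h' \<tau>) ?V ?V" by simp
    moreover have "?h' \<tau> q = n" using q by simp
    moreover have "?h' \<tau> p = ?m" using p pnq tp by simp
    moreover have "cycle_mult n ?m n = 1" using n2 by (auto simp: cycle_mult_def)
    ultimately show ?thesis by (simp add: bijs_def)
  qed
  have bijh: "bij_betw ?h ?S2 ?T"
  proof (rule bij_betw_byWitness[where f'="?h'"])
    show "\<forall>\<sigma>\<in>?S2. ?h' (?h \<sigma>) = \<sigma>"
    proof
      fix \<sigma> assume s: "\<sigma> \<in> ?S2"
      then have e: "\<sigma> \<in> extensional ?V" and sq: "\<sigma> q = n" by (auto simp: bijs_def)
      show "?h' (?h \<sigma>) = \<sigma>"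
      proof
        fix x show "?h' (?h \<sigma>) x = \<sigma> x"
          using e sq by (cases "x \<in> ?V") (auto simp: extensional_def)
      qed
    qed
    show "\<forall>\<tau>\<in>?T. ?h (?h' \<tau>) = \<tau>"
    proof
      fix \<tau> assume s: "\<tau> \<in> ?T"
      then have e: "\<tau> \<in> extensional ?V'" by (auto simp: bijs_def)
      show "?h (?h' \<tau>) = \<tau>"
      proof
        fix x show "?h (?h' \<tau>) x = \<tau> x"
          using e by (cases "x \<in> ?V'") (auto simp: extensional_def)
      qed
    qed
    show "?h ` ?S2 \<subseteq> ?T" by (intro image_subsetI hT)
    show "?h' ` ?T \<subseteq> ?S2" by (intro image_subsetI h'S)
  qed
  have s3: "sum ?F ?S2 = monom 1 1 * sum ?G ?T"
  proof -
    have "sum ?F ?S2 = sum (\<lambda>\<sigma>. monom 1 1 * ?G (?h \<sigma>)) ?S2"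
    proof (rule sum.cong[OF refl])
      fix \<sigma> assume s: "\<sigma> \<in> ?S2"
      have "outdeg ?V (graph_mult E) (cycle_mult n) \<sigma> = Suc (outdeg ?V' (graph_mult ?E') (cycle_mult ?m) (?h \<sigma>))"
        by (rule key[OF assms]) (use s S2p[OF s] in auto)
      then show "?F \<sigma> = monom 1 1 * ?G (?h \<sigma>)" by (simp add: mult_monom)
    qed
    also have "\<dots> = monom 1 1 * sum (\<lambda>\<sigma>. ?G (?h \<sigma>)) ?S2" by (simp add: sum_distrib_left)
    also have "sum (\<lambda>\<sigma>. ?G (?h \<sigma>)) ?S2 = sum ?G ?T" by (rule sum.reindex_bij_betw[OF bijh])
    finally show ?thesis .
  qed
  have mne: "(of_nat ?m :: rat) \<noteq> 0" using m1 by simp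
  let ?X = "monom (1::rat) 1 * sum ?G ?T"
  have r: "monom 1 1 * (of_nat ?m * sum ?G ?T) = smult (of_nat ?m) ?X"
    by (simp only: of_nat_mult_conv_smult mult_smult_right)
  have c: "of_nat n / of_nat ?m * of_nat ?m = (of_nat n :: rat)" using mne by simp
  have "smult (of_nat n / of_nat ?m) (monom 1 1 * (of_nat ?m * sum ?G ?T)) = smult (of_nat n) ?X"
    unfolding r smult_smult c ..
  also have "\<dots> = of_nat n * ?X" by (simp only: of_nat_mult_conv_smult)
  finally show ?thesis unfolding s1 s2 s3 by (rule sym)
qed

end
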